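(* Let $A$ be a finite alphabet and let $Z\subseteq A^+$ be a code such that $Z=XY$ for some non-empty $X,Y\subseteq A^+$. If $|X|=2$ or $|Y|=2$, then $Z$ is an alt-induced code.
   Context: $A^+$ is the set of non-empty words over $A$; $XY=\{xy:x\in X,y\in Y\}$. A set $Z\subseteq A^+$ is a code if every word admits at most one factorization into words of $Z$. For non-empty $X,Y\subseteq A^+$, $(X,Y)$ is an alternative code if no word of $A^+$ admits two different similar alternative factorizations on $(X,Y)$ (factorizations $u_1\cdots u_n$, $n\ge2$, $u_i\in X\cup Y$, alternating between $X$ and $Y$; similar = beginning in the same set and ending in the same set); equivalently, $XY$ is a code and the product $XY$ is unambiguous (each element of $XY$ has exactly one factorization $xy$ with $x\in X,y\in Y$). $Z$ is an alt-induced code if $Z=XY$ for some alternative code $(X,Y)$. *)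

theory Defs
  imports Main
begin

definition plus_words :: "'a set \<Rightarrow> 'a list set" where
  "plus_words A = lists A - {[]}"

definition conc :: "'a list set \<Rightarrow> 'a list set \<Rightarrow> 'a list set" where
  "conc X Y = {x @ y | x y. x \<in> X \<and> y \<in> Y}"

definition is_code :: "'a list set \<Rightarrow> bool" where
  "is_code Z \<longleftrightarrow> (\<forall>us vs. set us \<subseteq> Z \<longrightarrow> set vs \<subseteq> Z \<longrightarrow> concat us = concat vs \<longrightarrow> us = vs)"

text \<open>The boolean b records the starting set (True = X, False = Y);
the i-th factor (0-based) lies in X iff (even i = b).\<close>
definition alt_fact :: "'a list set \<Rightarrow> 'a list set \<Rightarrow> bool \<Rightarrow> 'a list list \<Rightarrow> bool" where
  "alt_fact X Y b us \<longleftrightarrow> length us \<ge> 2 \<and>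
     (\<forall>i < length us. us ! i \<in> (if (even i = b) then X else Y))"

text \<open>Starting set and ending set of an alternative factorization (True = X, False = Y).\<close>
definition alt_end :: "bool \<Rightarrow> 'a list list \<Rightarrow> bool" where
  "alt_end b us = (even (length us - 1) = b)"

definition alt_code :: "'a set \<Rightarrow> 'a list set \<Rightarrow> 'a list set \<Rightarrow> bool" where
  "alt_code A X Y \<longleftrightarrow> X \<noteq> {} \<and> Y \<noteq> {} \<and> X \<subseteq> plus_words A \<and> Y \<subseteq> plus_words A \<and>
     (\<forall>b c us vs. alt_fact X Y b us \<longrightarrow> alt_fact X Y c vs \<longrightarrow> concat us = concat vs \<longrightarrow>
        b = c \<longrightarrow> alt_end b us = alt_end c vs \<longrightarrow> us = vs)"

definition alt_induced_code :: "'a set \<Rightarrow> 'a list set \<Rightarrow> bool" where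
  "alt_induced_code A Z \<longleftrightarrow> (\<exists>X Y. alt_code A X Y \<and> Z = conc X Y)"

end

theory Submission
  imports Defs
begin

fun pairs :: "'a list list \<Rightarrow> 'a list list" where
  "pairs (a#b#r) = (a@b) # pairs r"
| "pairs _ = []"

definition Q :: "'a list set \<Rightarrow> 'a list set \<Rightarrow> 'a list list \<Rightarrow> bool" where
  "Q X Y us \<longleftrightarrow> (\<forall>i < length us. us ! i \<in> (if even i then X else Y))"

definition unamb :: "'a list set \<Rightarrow> 'a list set \<Rightarrow> bool" where
  "unamb X Y \<longleftrightarrow> (\<forall>x\<in>X. \<forall>x'\<in>X. \<forall>y\<in>Y. \<forall>y'\<in>Y. x@y = x'@y' \<longrightarrow> x = x' \<and> y = y')"

lemma Q_Nil[simp]: "Q X Y []" by (simp add: Q_def)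

lemma Q_Cons2[simp]: "Q X Y (a#b#r) \<longleftrightarrow> a \<in> X \<and> b \<in> Y \<and> Q X Y r"
proof
  assume h: "Q X Y (a#b#r)"
  have "a \<in> X" using h[unfolded Q_def, rule_format, of 0] by simp
  moreover have "b \<in> Y" using h[unfolded Q_def, rule_format, of 1] by simp
  moreover have "Q X Y r" unfolding Q_def
  proof (intro allI impI)
    fix i assume "i < length r"
    thus "r ! i \<in> (if even i then X else Y)"
      using h[unfolded Q_def, rule_format, of "Suc (Suc i)"] by simp
  qed
  ultimately show "a \<in> X \<and> b \<in> Y \<and> Q X Y r" by blast
next
  assume h: "a \<in> X \<and> b \<in> Y \<and> Q X Y r"
  show "Q X Y (a#b#r)" unfolding Q_def
  proof (intro allI impI)
    fix i assume i: "i < length (a#b#r)"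
    show "(a#b#r) ! i \<in> (if even i then X else Y)"
    proof (cases i)
      case 0 thus ?thesis using h by simp
    next
      case (Suc j) note j = this
      show ?thesis
      proof (cases j)
        case 0 thus ?thesis using h j by simp
      next
        case (Suc k)
        thus ?thesis using h j i unfolding Q_def by auto
      qed
    qed
  qed
qed

lemma Q_append1: "Q X Y (us @ [v]) \<longleftrightarrow> Q X Y us \<and> v \<in> (if even (length us) then X else Y)"
proof
  assume h: "Q X Y (us @ [v])"
  have "Q X Y us" unfolding Q_def
  proof (intro allI impI)
    fix i assume "i < length us"
    thus "us ! i \<in> (if even i then X else Y)"
      using h[unfolded Q_def, rule_format, of i] by (simp add: nth_append)
  qed
  moreover have "v \<in> (if even (length us) then X else Y)"
    using h[unfolded Q_def, rule_format, of "length us"] by simp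
  ultimately show "Q X Y us \<and> v \<in> (if even (length us) then X else Y)" by blast
next
  assume h: "Q X Y us \<and> v \<in> (if even (length us) then X else Y)"
  show "Q X Y (us @ [v])" unfolding Q_def
  proof (intro allI impI)
    fix i assume i: "i < length (us @ [v])"
    show "(us @ [v]) ! i \<in> (if even i then X else Y)"
    proof (cases "i < length us")
      case True thus ?thesis using h unfolding Q_def by (simp add: nth_append)
    next
      case False
      hence "i = length us" using i by simp
      thus ?thesis using h by simp
    qed
  qed
qed

lemma concat_pairs: "even (length us) \<Longrightarrow> concat (pairs us) = concat us"
  by (induction us rule: pairs.induct) auto

lemma set_pairs: "Q X Y us \<Longrightarrow> even (length us) \<Longrightarrow> set (pairs us) \<subseteq> conc X Y"
  by (induction us rule: pairs.induct) (auto simp: conc_def)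

lemma pairs_inj:
  assumes "unamb X Y"
  shows "Q X Y us \<Longrightarrow> Q X Y vs \<Longrightarrow> even (length us) \<Longrightarrow> even (length vs) \<Longrightarrow>
    pairs us = pairs vs \<Longrightarrow> us = vs"
proof (induction us arbitrary: vs rule: pairs.induct)
  case (1 a b r)
  then obtain c d s where vs: "vs = c#d#s"
    by (cases vs rule: pairs.cases) auto
  with 1 have "a@b = c@d" "a \<in> X" "c \<in> X" "b \<in> Y" "d \<in> Y" by auto
  with assms have "a = c" "b = d" unfolding unamb_def by blast+
  with 1 vs show ?case by auto
next
  case ("2_1")
  thus ?case by (cases vs rule: pairs.cases) auto
next
  case ("2_2" v)
  thus ?case by simp
qed

lemma alt_fact_Q:
  assumes "alt_fact X Y b us" "x0 \<in> X"
  shows "Q X Y ((if b then [] else [x0]) @ us)"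
proof (cases b)
  case True thus ?thesis using assms unfolding alt_fact_def Q_def by auto
next
  case False
  show ?thesis unfolding Q_def
  proof (intro allI impI)
    fix i assume i: "i < length ((if b then [] else [x0]) @ us)"
    show "((if b then [] else [x0]) @ us) ! i \<in> (if even i then X else Y)"
    proof (cases i)
      case 0 thus ?thesis using False assms(2) by simp
    next
      case (Suc j)
      thus ?thesis using False i assms(1) unfolding alt_fact_def by auto
    qed
  qed
qed

lemma key:
  assumes "X \<noteq> {}" "Y \<noteq> {}" "X \<subseteq> plus_words A" "Y \<subseteq> plus_words A"
    "is_code (conc X Y)" "unamb X Y"
  shows "alt_code A X Y"
  unfolding alt_code_def
proof (intro conjI assms allI impI)
  fix b c :: bool and us vs :: "'a list list"
  assume fu: "alt_fact X Y b us" and fv: "alt_fact X Y c vs" and ce: "concat us = concat vs"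
    and bc: "b = c" and ee: "alt_end b us = alt_end c vs"
  obtain x0 where x0: "x0 \<in> X" using assms by blast
  obtain y0 where y0: "y0 \<in> Y" using assms by blast
  have lu: "length us \<ge> 2" and lv: "length vs \<ge> 2" using fu fv by (auto simp: alt_fact_def)
  have par: "even (length us) = even (length vs)"
    using ee bc lu lv unfolding alt_end_def by auto
  define pre where "pre = (if b then [] else [x0])"
  define post where "post = (if even (length (pre @ us)) then [] else [y0])"
  have post2: "post = (if even (length (pre @ vs)) then [] else [y0])"
    unfolding post_def using par by simp
  have qu: "Q X Y (pre @ us)" using alt_fact_Q[OF fu x0] pre_def by simp
  have qv: "Q X Y (pre @ vs)" using alt_fact_Q[OF fv x0] pre_def bc by simp
  have qu': "Q X Y (pre @ us @ post)"
    using qu y0 unfolding post_def by (auto simp: Q_append1[of X Y "pre @ us", simplified])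
  have qv': "Q X Y (pre @ vs @ post)"
    using qv y0 unfolding post2 by (auto simp: Q_append1[of X Y "pre @ vs", simplified])
  have eu: "even (length (pre @ us @ post))" unfolding post_def by auto
  have ev: "even (length (pre @ vs @ post))" unfolding post2 by auto
  have "concat (pairs (pre @ us @ post)) = concat (pairs (pre @ vs @ post))"
    using concat_pairs[OF eu] concat_pairs[OF ev] ce by simp
  hence "pairs (pre @ us @ post) = pairs (pre @ vs @ post)"
    using assms(5) set_pairs[OF qu' eu] set_pairs[OF qv' ev] unfolding is_code_def by blast
  hence "pre @ us @ post = pre @ vs @ post"
    using pairs_inj[OF assms(6) qu' qv' eu ev] by blast
  thus "us = vs" by simp
qed

lemma prefix_case:
  assumes X: "X = {x1, x1 @ u}" and "X \<subseteq> plus_words A" "Y \<subseteq> plus_words A" "Y \<noteq> {}"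
    "is_code (conc X Y)"
  shows "alt_induced_code A (conc X Y)"
proof -
  define Y' where "Y' = Y \<union> conc {u} Y"
  have eq: "conc {x1} Y' = conc X Y" unfolding Y'_def conc_def X
    by auto (metis append_assoc)
  have ul: "u \<in> lists A" using assms(2) X unfolding plus_words_def by auto
  have "Y' \<subseteq> plus_words A" using assms(3) ul unfolding Y'_def conc_def plus_words_def by auto blast
  moreover have "x1 \<in> plus_words A" using assms(2) X by auto
  ultimately have "alt_code A {x1} Y'"
    using key[of "{x1}" Y' A] eq assms(4,5) unfolding unamb_def Y'_def by auto
  thus ?thesis using eq unfolding alt_induced_code_def by metis
qed

lemma suffix_case:
  assumes Y: "Y = {y1, u @ y1}" and "X \<subseteq> plus_words A" "Y \<subseteq> plus_words A" "X \<noteq> {}"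
    "is_code (conc X Y)"
  shows "alt_induced_code A (conc X Y)"
proof -
  define X' where "X' = X \<union> conc X {u}"
  have eq: "conc X' {y1} = conc X Y" unfolding X'_def conc_def Y
    by auto (metis append_assoc)
  have ul: "u \<in> lists A" using assms(3) Y unfolding plus_words_def by auto
  have "X' \<subseteq> plus_words A" using assms(2) ul unfolding X'_def conc_def plus_words_def by auto blast
  moreover have "y1 \<in> plus_words A" using assms(3) Y by auto
  ultimately have "alt_code A X' {y1}"
    using key[of X' "{y1}" A] eq assms(4,5) unfolding unamb_def X'_def by auto
  thus ?thesis using eq unfolding alt_induced_code_def by metis
qed

lemma X_case:
  assumes "card X = 2" "X \<subseteq> plus_words A" "Y \<subseteq> plus_words A" "Y \<noteq> {}"
    "is_code (conc X Y)"
  shows "alt_induced_code A (conc X Y)"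
proof -
  obtain x1 x2 where X: "X = {x1, x2}" "x1 \<noteq> x2" using assms(1) card_2_iff by metis
  show ?thesis
  proof (cases "\<exists>u. x2 = x1 @ u")
    case True
    then obtain u where "x2 = x1 @ u" by blast
    thus ?thesis using prefix_case[of X x1 u A Y] X assms by auto
  next
    case F1: False
    show ?thesis
    proof (cases "\<exists>u. x1 = x2 @ u")
      case True
      then obtain u where "x1 = x2 @ u" by blast
      hence "X = {x2, x2 @ u}" using X by auto
      thus ?thesis using prefix_case[of X x2 u A Y] assms by auto
    next
      case F2: False
      have "unamb X Y" unfolding unamb_def
      proof (intro ballI impI)
        fix x x' y y' assume h: "x \<in> X" "x' \<in> X" "y \<in> Y" "y' \<in> Y" "x @ y = x' @ y'"
        have "x = x'"
        proof (rule ccontr)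
          assume "x \<noteq> x'"
          with h(1,2) X have "(x = x1 \<and> x' = x2) \<or> (x = x2 \<and> x' = x1)" by auto
          moreover have "(\<exists>us. x = x' @ us) \<or> (\<exists>us. x' = x @ us)"
            using h(5) by (auto simp: append_eq_append_conv2)
          ultimately show False using F1 F2 by blast
        qed
        thus "x = x' \<and> y = y'" using h(5) by simp
      qed
      moreover have "X \<noteq> {}" using X by auto
      ultimately have "alt_code A X Y" using key assms by blast
      thus ?thesis unfolding alt_induced_code_def by blast
    qed
  qed
qed

lemma Y_case:
  assumes "card Y = 2" "X \<subseteq> plus_words A" "Y \<subseteq> plus_words A" "X \<noteq> {}"
    "is_code (conc X Y)"
  shows "alt_induced_code A (conc X Y)"
proof -
  obtain y1 y2 where Y: "Y = {y1, y2}" "y1 \<noteq> y2" using assms(1) card_2_iff by metis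
  show ?thesis
  proof (cases "\<exists>u. y2 = u @ y1")
    case True
    then obtain u where "y2 = u @ y1" by blast
    thus ?thesis using suffix_case[of Y y1 u X A] Y assms by auto
  next
    case F1: False
    show ?thesis
    proof (cases "\<exists>u. y1 = u @ y2")
      case True
      then obtain u where "y1 = u @ y2" by blast
      hence "Y = {y2, u @ y2}" using Y by auto
      thus ?thesis using suffix_case[of Y y2 u X A] assms by auto
    next
      case F2: False
      have "unamb X Y" unfolding unamb_def
      proof (intro ballI impI)
        fix x x' y y' assume h: "x \<in> X" "x' \<in> X" "y \<in> Y" "y' \<in> Y" "x @ y = x' @ y'"
        have "y = y'"
        proof (rule ccontr)
          assume "y \<noteq> y'"
          with h(3,4) Y have "(y = y1 \<and> y' = y2) \<or> (y = y2 \<and> y' = y1)" by auto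
          moreover have "(\<exists>us. y' = us @ y) \<or> (\<exists>us. y = us @ y')"
            using h(5) by (auto simp: append_eq_append_conv2)
          ultimately show False using F1 F2 by blast
        qed
        thus "x = x' \<and> y = y'" using h(5) by simp
      qed
      moreover have "Y \<noteq> {}" using Y by auto
      ultimately have "alt_code A X Y" using key assms by blast
      thus ?thesis unfolding alt_induced_code_def by blast
    qed
  qed
qed

theorem mainTheorem3:
  fixes A :: "'a set" and X Y Z :: "'a list set"
  assumes "finite A"
    and "Z \<subseteq> plus_words A"
    and "is_code Z"
    and "X \<noteq> {}" and "Y \<noteq> {}"
    and "X \<subseteq> plus_words A" and "Y \<subseteq> plus_words A"
    and "Z = conc X Y"
    and "card X = 2 \<or> card Y = 2"
  shows "alt_induced_code A Z"
  using assms X_case[of X A Y] Y_case[of Y X A] by auto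

end
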